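(* For every topological space $X$ the following are equivalent: (1) $\pi_0^{\mathrm{ps}}X$ is topological (its pseudotopology is the ultrafilter convergence of some topology); (2) $\pi_0^{\mathrm{ps}}X=\pi_0^{\mathrm{top}}X$ (the quotient pseudotopology on the set of path components equals the ultrafilter convergence of the quotient topology); (3) the natural projection $q_X\colon X\to\pi_0^{\mathrm{top}}X$ is biquotient.
   Context: For a set $X$, $U(X)$ is the set of ultrafilters on $X$, $\dot x$ the principal ultrafilter at $x$; for $f\colon X\to Y$, $f_*\mathscr F=\{S\subset Y:f^{-1}(S)\in\mathscr F\}$. A pseudotopological structure on $X$ is a relation $u\subset U(X)\times X$ containing all $(\dot x,x)$; write $\mathscr U\to x$. A topological space is regarded as a pseudotopological space via ultrafilter convergence. For a topological space $X$, $\pi_0^{\mathrm{ps}}X$ is the set of path components of $X$ with the final pseudotopology w.r.t. the projection $q_X$ (which assigns to each point its path component): $\mathscr U\to c$ iff $\mathscr U=\dot c$ or $\mathscr U=(q_X)_*\mathscr V$ and $c=q_X(x)$ for some ultrafilter $\mathscr V$ on $X$ converging to $x$. $\pi_0^{\mathrm{top}}X$ is the same set with the quotient topology w.r.t. $q_X$. A continuous surjection $f\colon X\to Y$ of topological spaces is biquotient if for every $y\in Y$ and every cover $\mathcal O$ of $f^{-1}(y)$ by open subsets of $X$, finitely many sets $f(O)$, $O\in\mathcal O$, cover some neighbourhood of $y$ in $Y$. *)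

theory Defs
  imports "HOL-Analysis.Analysis"
begin

definition is_ultrafilter_on :: "'a set \<Rightarrow> 'a set set \<Rightarrow> bool" where
  "is_ultrafilter_on S F \<longleftrightarrow>
     F \<subseteq> Pow S \<and> S \<in> F \<and> {} \<notin> F \<and>
     (\<forall>A B. A \<in> F \<and> A \<subseteq> B \<and> B \<subseteq> S \<longrightarrow> B \<in> F) \<and>
     (\<forall>A B. A \<in> F \<and> B \<in> F \<longrightarrow> A \<inter> B \<in> F) \<and>
     (\<forall>A. A \<subseteq> S \<longrightarrow> A \<in> F \<or> S - A \<in> F)"

definition principal_uf :: "'a set \<Rightarrow> 'a \<Rightarrow> 'a set set" where
  "principal_uf S x = {A. A \<subseteq> S \<and> x \<in> A}"

definition pushforward :: "'a set \<Rightarrow> 'b set \<Rightarrow> ('a \<Rightarrow> 'b) \<Rightarrow> 'a set set \<Rightarrow> 'b set set" where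
  "pushforward S T f F = {B. B \<subseteq> T \<and> {x \<in> S. f x \<in> B} \<in> F}"

text \<open>Ultrafilter convergence relation of a topological space (as a pseudotopology
  on its underlying set): U \<rightarrow> x iff every open neighbourhood of x belongs to U.\<close>
definition ultra_conv :: "'a topology \<Rightarrow> ('a set set \<times> 'a) set" where
  "ultra_conv T = {(U, x). is_ultrafilter_on (topspace T) U \<and> x \<in> topspace T \<and>
                     (\<forall>W. openin T W \<and> x \<in> W \<longrightarrow> W \<in> U)}"

definition pc_proj :: "'a topology \<Rightarrow> 'a \<Rightarrow> 'a set" where
  "pc_proj X x = path_component_of_set X x"

text \<open>pi_0^ps X: the final pseudotopology on the path components w.r.t. q_X.\<close>
definition pi0_ps :: "'a topology \<Rightarrow> ('a set set set \<times> 'a set) set" where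
  "pi0_ps X = {(U, c). is_ultrafilter_on (path_components_of X) U \<and> c \<in> path_components_of X \<and>
     (U = principal_uf (path_components_of X) c \<or>
      (\<exists>V x. (V, x) \<in> ultra_conv X \<and>
             U = pushforward (topspace X) (path_components_of X) (pc_proj X) V \<and>
             c = pc_proj X x))}"

definition pi0_top :: "'a topology \<Rightarrow> 'a set topology" where
  "pi0_top X = topology (\<lambda>W. W \<subseteq> path_components_of X \<and>
                               openin X {x \<in> topspace X. pc_proj X x \<in> W})"

definition biquotient_map :: "'a topology \<Rightarrow> 'b topology \<Rightarrow> ('a \<Rightarrow> 'b) \<Rightarrow> bool" where
  "biquotient_map X Y f \<longleftrightarrow>
     continuous_map X Y f \<and> f ` topspace X = topspace Y \<and>
     (\<forall>y \<in> topspace Y. \<forall>Cov. (\<forall>W \<in> Cov. openin X W) \<and>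
         {x \<in> topspace X. f x = y} \<subseteq> \<Union>Cov \<longrightarrow>
         (\<exists>Fin N. finite Fin \<and> Fin \<subseteq> Cov \<and> openin Y N \<and> y \<in> N \<and>
                 N \<subseteq> (\<Union>W \<in> Fin. f ` W)))"

end

theory Submission imports Defs begin

definition fipS :: "'a set \<Rightarrow> 'a set set \<Rightarrow> bool" where
  "fipS S G \<longleftrightarrow> (\<forall>F. finite F \<and> F \<subseteq> G \<longrightarrow> S \<inter> \<Inter>F \<noteq> {})"

lemma fipS_insert:
  assumes "fipS S M" "\<And>F. finite F \<Longrightarrow> F \<subseteq> M \<Longrightarrow> S \<inter> \<Inter>F \<inter> A \<noteq> {}"
  shows "fipS S (insert A M)"
  unfolding fipS_def
proof (intro allI impI)
  fix F assume F: "finite F \<and> F \<subseteq> insert A M"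
  then have "S \<inter> \<Inter>(F - {A}) \<inter> A \<noteq> {}" using assms(2)[of "F - {A}"] by blast
  moreover have "S \<inter> \<Inter>(F - {A}) \<inter> A \<subseteq> S \<inter> \<Inter>F" by blast
  ultimately show "S \<inter> \<Inter>F \<noteq> {}" by blast
qed

lemma ultrafilter_exists:
  assumes "B \<subseteq> Pow S" "fipS S B"
  shows "\<exists>U. is_ultrafilter_on S U \<and> B \<subseteq> U"
proof -
  let ?A = "{G. B \<subseteq> G \<and> G \<subseteq> Pow S \<and> fipS S G}"
  have "\<exists>M\<in>?A. \<forall>X\<in>?A. M \<subseteq> X \<longrightarrow> X = M"
  proof (rule subset_Zorn_nonempty)
    show "?A \<noteq> {}" using assms by blast
  next
    fix C assume C: "C \<noteq> {}" "subset.chain ?A C"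
    have CA: "C \<subseteq> ?A" using C(2) by (simp add: subset.chain_def)
    have "fipS S (\<Union>C)" unfolding fipS_def
    proof (intro allI impI)
      fix F assume FF: "finite F \<and> F \<subseteq> \<Union>C"
      from FF have f1: "finite F" and f2: "F \<subseteq> \<Union>C" by auto
      obtain G where G: "G \<in> C" "F \<subseteq> G" by (rule finite_subset_Union_chain[OF f1 f2 C(1) C(2)])
      have "fipS S G" using CA G(1) by blast
      then show "S \<inter> \<Inter>F \<noteq> {}" using f1 G(2) unfolding fipS_def by blast
    qed
    moreover obtain G0 where "G0 \<in> C" using C(1) by blast
    then have "B \<subseteq> \<Union>C" using CA by blast
    moreover have "\<Union>C \<subseteq> Pow S" using CA by blast
    ultimately show "\<Union>C \<in> ?A" by blast
  qed
  then obtain M where MA: "M \<in> ?A" and max0: "\<forall>X\<in>?A. M \<subseteq> X \<longrightarrow> X = M" by (rule bexE)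
  have M: "B \<subseteq> M" "M \<subseteq> Pow S" "fipS S M" using MA by auto
  have max: "X = M" if "X \<in> ?A" "M \<subseteq> X" for X using max0 that by auto
  have absorb: "A \<in> M" if "A \<subseteq> S" "\<And>F. finite F \<Longrightarrow> F \<subseteq> M \<Longrightarrow> S \<inter> \<Inter>F \<inter> A \<noteq> {}" for A
  proof -
    have "fipS S (insert A M)" by (rule fipS_insert[OF M(3) that(2)])
    moreover have "B \<subseteq> insert A M" using M(1) by blast
    moreover have "insert A M \<subseteq> Pow S" using M(2) that(1) by simp
    ultimately have "insert A M \<in> ?A" by simp
    then have "insert A M = M" by (rule max) (rule subset_insertI)
    then show ?thesis by blast
  qed
  have fipM: "S \<inter> \<Inter>F \<noteq> {}" if "finite F" "F \<subseteq> M" for F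
    using M(3) that unfolding fipS_def by blast
  have "is_ultrafilter_on S M"
    unfolding is_ultrafilter_on_def
  proof (intro conjI allI impI)
    show "M \<subseteq> Pow S" by fact
    show "S \<in> M"
    proof (rule absorb)
      fix F assume "finite F" "F \<subseteq> M"
      then have "S \<inter> \<Inter>F \<noteq> {}" by (rule fipM)
      then show "S \<inter> \<Inter>F \<inter> S \<noteq> {}" by blast
    qed simp
    show "{} \<notin> M" using fipM[of "{{}}"] by auto
  next
    fix A C assume h: "A \<in> M \<and> A \<subseteq> C \<and> C \<subseteq> S"
    show "C \<in> M"
    proof (rule absorb)
      show "C \<subseteq> S" using h by blast
      fix F assume "finite F" "F \<subseteq> M"
      then have "S \<inter> \<Inter>(insert A F) \<noteq> {}" using h by (intro fipM) auto
      then obtain z where "z \<in> S" "z \<in> A" "z \<in> \<Inter>F" by blast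
      then show "S \<inter> \<Inter>F \<inter> C \<noteq> {}" using h by blast
    qed
  next
    fix A C assume h: "A \<in> M \<and> C \<in> M"
    show "A \<inter> C \<in> M"
    proof (rule absorb)
      show "A \<inter> C \<subseteq> S" using h M(2) by blast
      fix F assume "finite F" "F \<subseteq> M"
      then have "S \<inter> \<Inter>(insert A (insert C F)) \<noteq> {}" using h by (intro fipM) auto
      then obtain z where "z \<in> S" "z \<in> A" "z \<in> C" "z \<in> \<Inter>F" by blast
      then show "S \<inter> \<Inter>F \<inter> (A \<inter> C) \<noteq> {}" by blast
    qed
  next
    fix A assume A: "A \<subseteq> S"
    show "A \<in> M \<or> S - A \<in> M"
    proof (rule ccontr)
      assume n: "\<not> (A \<in> M \<or> S - A \<in> M)"
      obtain F1 where F1: "finite F1" "F1 \<subseteq> M" "S \<inter> \<Inter>F1 \<inter> A = {}"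
        using absorb[OF A] n by metis
      obtain F2 where F2: "finite F2" "F2 \<subseteq> M" "S \<inter> \<Inter>F2 \<inter> (S - A) = {}"
        using absorb[of "S - A"] n by (metis Diff_subset)
      have "S \<inter> \<Inter>(F1 \<union> F2) \<noteq> {}" using F1 F2 by (intro fipM) auto
      then obtain z where z: "z \<in> S" "z \<in> \<Inter>F1" "z \<in> \<Inter>F2" by blast
      show False
      proof (cases "z \<in> A")
        case True then show False using z F1(3) by blast
      next
        case False then show False using z F2(3) by blast
      qed
    qed
  qed
  then show ?thesis using M by blast
qed


lemma uf_D:
  assumes "is_ultrafilter_on S U"
  shows uf_sub0: "U \<subseteq> Pow S" and uf_top: "S \<in> U" and uf_empty: "{} \<notin> U"
    and uf_up: "\<And>A B. A \<in> U \<Longrightarrow> A \<subseteq> B \<Longrightarrow> B \<subseteq> S \<Longrightarrow> B \<in> U"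
    and uf_int: "\<And>A B. A \<in> U \<Longrightarrow> B \<in> U \<Longrightarrow> A \<inter> B \<in> U"
    and uf_compl: "\<And>A. A \<subseteq> S \<Longrightarrow> A \<in> U \<or> S - A \<in> U"
proof -
  note h = assms[unfolded is_ultrafilter_on_def]
  show "U \<subseteq> Pow S" using h by (elim conjE) assumption
  show "S \<in> U" using h by (elim conjE) assumption
  show "{} \<notin> U" using h by (elim conjE) assumption
  show "\<And>A B. A \<in> U \<Longrightarrow> A \<subseteq> B \<Longrightarrow> B \<subseteq> S \<Longrightarrow> B \<in> U" using h by (elim conjE) blast
  show "\<And>A B. A \<in> U \<Longrightarrow> B \<in> U \<Longrightarrow> A \<inter> B \<in> U" using h by (elim conjE) blast
  show "\<And>A. A \<subseteq> S \<Longrightarrow> A \<in> U \<or> S - A \<in> U" using h by (elim conjE) blast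
qed

lemma uf_sub: "is_ultrafilter_on S U \<Longrightarrow> A \<in> U \<Longrightarrow> A \<subseteq> S"
  using uf_sub0 by blast

lemma uf_not_both: "is_ultrafilter_on S U \<Longrightarrow> A \<in> U \<Longrightarrow> S - A \<in> U \<Longrightarrow> False"
proof -
  assume u: "is_ultrafilter_on S U" "A \<in> U" "S - A \<in> U"
  have "A \<inter> (S - A) \<in> U" using uf_int[OF u(1) u(2) u(3)] .
  moreover have "A \<inter> (S - A) = {}" by blast
  ultimately show False using uf_empty[OF u(1)] by simp
qed

lemma uf_union:
  assumes u: "is_ultrafilter_on S U" and "A \<subseteq> S" "B \<subseteq> S" "A \<union> B \<in> U"
  shows "A \<in> U \<or> B \<in> U"
proof (rule ccontr)
  assume n: "\<not> (A \<in> U \<or> B \<in> U)"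
  then have "S - A \<in> U" "S - B \<in> U" using uf_compl[OF u] assms by blast+
  then have "(S - A) \<inter> (S - B) \<in> U" using uf_int[OF u] by blast
  then have "(S - A) \<inter> (S - B) \<inter> (A \<union> B) \<in> U" using uf_int[OF u] assms(4) by blast
  moreover have "(S - A) \<inter> (S - B) \<inter> (A \<union> B) = {}" by blast
  ultimately show False using uf_empty[OF u] by simp
qed

lemma uf_finite_union:
  assumes u: "is_ultrafilter_on S U" and fin: "finite I"
  shows "(\<forall>i\<in>I. g i \<subseteq> S) \<Longrightarrow> (\<Union>i\<in>I. g i) \<in> U \<Longrightarrow> \<exists>i\<in>I. g i \<in> U"
  using fin
proof (induction I rule: finite_induct)
  case empty then show ?case using uf_empty[OF u] by simp
next
  case (insert j I)
  have e: "(\<Union>i\<in>insert j I. g i) = g j \<union> (\<Union>i\<in>I. g i)" by simp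
  have "g j \<in> U \<or> (\<Union>i\<in>I. g i) \<in> U"
    by (rule uf_union[OF u]) (use insert.prems e in auto)
  then show ?case using insert by auto
qed

lemma uf_Inter:
  assumes u: "is_ultrafilter_on S U" and fin: "finite G"
  shows "G \<subseteq> U \<Longrightarrow> S \<inter> \<Inter>G \<in> U"
  using fin
proof (induction G rule: finite_induct)
  case empty then show ?case using uf_top[OF u] by simp
next
  case (insert A G)
  have "A \<inter> (S \<inter> \<Inter>G) \<in> U" using insert uf_int[OF u] by blast
  moreover have "A \<inter> (S \<inter> \<Inter>G) = S \<inter> \<Inter>(insert A G)" by auto
  ultimately show ?case by simp
qed

lemma uf_eq:
  assumes u: "is_ultrafilter_on S U" and u': "is_ultrafilter_on S U'" and sub: "U \<subseteq> U'"
  shows "U = U'"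
proof
  show "U' \<subseteq> U"
  proof
    fix A assume A: "A \<in> U'"
    show "A \<in> U"
    proof (rule ccontr)
      assume "A \<notin> U"
      then have "S - A \<in> U" using uf_compl[OF u] uf_sub[OF u', OF A] by blast
      then show False using uf_not_both[OF u' A] sub by blast
    qed
  qed
qed (rule sub)

lemma uf_I:
  assumes "U \<subseteq> Pow S" "S \<in> U" "{} \<notin> U"
    "\<And>A B. A \<in> U \<Longrightarrow> A \<subseteq> B \<Longrightarrow> B \<subseteq> S \<Longrightarrow> B \<in> U"
    "\<And>A B. A \<in> U \<Longrightarrow> B \<in> U \<Longrightarrow> A \<inter> B \<in> U"
    "\<And>A. A \<subseteq> S \<Longrightarrow> A \<in> U \<or> S - A \<in> U"
  shows "is_ultrafilter_on S U"
  unfolding is_ultrafilter_on_def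
  by (intro conjI allI impI; (elim conjE)?) (fact | rule assms; assumption)+

lemma mem_pushforward: "B \<in> pushforward S T f V \<longleftrightarrow> B \<subseteq> T \<and> {x \<in> S. f x \<in> B} \<in> V"
  by (simp add: pushforward_def)

lemma uf_pushforward:
  assumes f: "f ` S \<subseteq> T" and u: "is_ultrafilter_on S V"
  shows "is_ultrafilter_on T (pushforward S T f V)"
proof (rule uf_I)
  show "pushforward S T f V \<subseteq> Pow T" by (auto simp: mem_pushforward)
  have "{x \<in> S. f x \<in> T} = S" using f by blast
  then show "T \<in> pushforward S T f V" using uf_top[OF u] by (simp add: mem_pushforward)
  show "{} \<notin> pushforward S T f V" using uf_empty[OF u] by (simp add: mem_pushforward)
next
  fix A B assume h: "A \<in> pushforward S T f V" "A \<subseteq> B" "B \<subseteq> T"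
  have a: "{x \<in> S. f x \<in> A} \<in> V" using h(1) by (simp add: mem_pushforward)
  have "{x \<in> S. f x \<in> A} \<subseteq> {x \<in> S. f x \<in> B}" using h(2) by blast
  then have "{x \<in> S. f x \<in> B} \<in> V" using uf_up[OF u a] by blast
  then show "B \<in> pushforward S T f V" using h(3) by (simp add: mem_pushforward)
next
  fix A B assume h: "A \<in> pushforward S T f V" "B \<in> pushforward S T f V"
  have a: "{x \<in> S. f x \<in> A} \<in> V" "A \<subseteq> T" using h(1) by (simp_all add: mem_pushforward)
  have b: "{x \<in> S. f x \<in> B} \<in> V" "B \<subseteq> T" using h(2) by (simp_all add: mem_pushforward)
  have "{x \<in> S. f x \<in> A} \<inter> {x \<in> S. f x \<in> B} \<in> V" using uf_int[OF u a(1) b(1)] .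
  moreover have "{x \<in> S. f x \<in> A} \<inter> {x \<in> S. f x \<in> B} = {x \<in> S. f x \<in> A \<inter> B}" by blast
  ultimately show "A \<inter> B \<in> pushforward S T f V" using a(2) by (auto simp: mem_pushforward)
next
  fix A assume A: "A \<subseteq> T"
  have "{x \<in> S. f x \<in> A} \<in> V \<or> S - {x \<in> S. f x \<in> A} \<in> V" by (rule uf_compl[OF u]) blast
  moreover have "S - {x \<in> S. f x \<in> A} = {x \<in> S. f x \<in> T - A}" using f by blast
  ultimately show "A \<in> pushforward S T f V \<or> T - A \<in> pushforward S T f V"
    using A by (auto simp: mem_pushforward)
qed

lemma principal_uf_ultra: "x \<in> S \<Longrightarrow> is_ultrafilter_on S (principal_uf S x)"
  unfolding is_ultrafilter_on_def principal_uf_def by auto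

lemma pi0_top_istop:
  "istopology (\<lambda>W. W \<subseteq> path_components_of X \<and>
                   openin X {x \<in> topspace X. pc_proj X x \<in> W})"
  unfolding istopology_def
proof (rule conjI; intro allI impI)
  fix S T assume h: "S \<subseteq> path_components_of X \<and> openin X {x \<in> topspace X. pc_proj X x \<in> S}"
     "T \<subseteq> path_components_of X \<and> openin X {x \<in> topspace X. pc_proj X x \<in> T}"
  have "{x \<in> topspace X. pc_proj X x \<in> S \<inter> T} =
        {x \<in> topspace X. pc_proj X x \<in> S} \<inter> {x \<in> topspace X. pc_proj X x \<in> T}" by blast
  then show "S \<inter> T \<subseteq> path_components_of X \<and> openin X {x \<in> topspace X. pc_proj X x \<in> S \<inter> T}"
    using h by auto
next
  fix K assume h: "\<forall>S\<in>K. S \<subseteq> path_components_of X \<and> openin X {x \<in> topspace X. pc_proj X x \<in> S}"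
  have "{x \<in> topspace X. pc_proj X x \<in> \<Union>K} = (\<Union>S\<in>K. {x \<in> topspace X. pc_proj X x \<in> S})" by blast
  then show "\<Union>K \<subseteq> path_components_of X \<and> openin X {x \<in> topspace X. pc_proj X x \<in> \<Union>K}"
    using h by auto
qed

lemma openin_pi0_top:
  "openin (pi0_top X) W \<longleftrightarrow> W \<subseteq> path_components_of X \<and>
                   openin X {x \<in> topspace X. pc_proj X x \<in> W}"
  unfolding pi0_top_def topology_inverse'[OF pi0_top_istop] by (rule refl)

lemma pc_proj_in: "x \<in> topspace X \<Longrightarrow> pc_proj X x \<in> path_components_of X"
  unfolding pc_proj_def by (simp add: path_component_in_path_components_of)

lemma pc_proj_image: "pc_proj X ` topspace X \<subseteq> path_components_of X"
  by (auto simp: pc_proj_in)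

lemma pc_proj_surj: "pc_proj X ` topspace X = path_components_of X"
  unfolding pc_proj_def path_components_of_def by simp

lemma topspace_pi0_top: "topspace (pi0_top X) = path_components_of X"
proof -
  have "openin (pi0_top X) (path_components_of X)"
  proof -
    have "{x \<in> topspace X. pc_proj X x \<in> path_components_of X} = topspace X"
      by (auto simp: pc_proj_in)
    then show ?thesis unfolding openin_pi0_top by simp
  qed
  then have "path_components_of X \<subseteq> topspace (pi0_top X)" by (rule openin_subset)
  moreover have "topspace (pi0_top X) \<subseteq> path_components_of X"
    unfolding topspace_def openin_pi0_top by auto
  ultimately show ?thesis by blast
qed

lemma pc_proj_eq:
  assumes "c \<in> path_components_of X" "x \<in> topspace X"
  shows "pc_proj X x = c \<longleftrightarrow> x \<in> c"
proof -
  obtain a where a: "a \<in> topspace X" "c = path_component_of_set X a"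
    using assms(1) unfolding path_components_of_def by blast
  show ?thesis unfolding pc_proj_def a(2)
    by (metis (mono_tags, lifting) a(1) assms(2) mem_Collect_eq path_component_of_equiv)
qed

lemma fiber_eq:
  assumes "c \<in> path_components_of X"
  shows "{x \<in> topspace X. pc_proj X x = c} = c"
proof
  show "{x \<in> topspace X. pc_proj X x = c} \<subseteq> c" using pc_proj_eq[OF assms] by auto
  show "c \<subseteq> {x \<in> topspace X. pc_proj X x = c}"
  proof
    fix x assume x: "x \<in> c"
    then have "x \<in> topspace X" using path_components_of_subset[OF assms] by blast
    then show "x \<in> {x \<in> topspace X. pc_proj X x = c}" using pc_proj_eq[OF assms] x by auto
  qed
qed


lemma ps_sub_top: "pi0_ps X \<subseteq> ultra_conv (pi0_top X)"
proof (rule subrelI)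
  fix U c assume "(U, c) \<in> pi0_ps X"
  then have u: "is_ultrafilter_on (path_components_of X) U" and c: "c \<in> path_components_of X"
    and cs: "U = principal_uf (path_components_of X) c \<or>
      (\<exists>V x. (V, x) \<in> ultra_conv X \<and>
             U = pushforward (topspace X) (path_components_of X) (pc_proj X) V \<and>
             c = pc_proj X x)"
    unfolding pi0_ps_def by auto
  have "W \<in> U" if W: "openin (pi0_top X) W" "c \<in> W" for W
  proof -
    have WP: "W \<subseteq> path_components_of X" and Wo: "openin X {x \<in> topspace X. pc_proj X x \<in> W}"
      using W(1) unfolding openin_pi0_top by auto
    from cs show ?thesis
    proof
      assume "U = principal_uf (path_components_of X) c"
      then show ?thesis using WP W(2) by (simp add: principal_uf_def)
    next
      assume "\<exists>V x. (V, x) \<in> ultra_conv X \<and>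
             U = pushforward (topspace X) (path_components_of X) (pc_proj X) V \<and>
             c = pc_proj X x"
      then obtain V x where V: "(V, x) \<in> ultra_conv X"
        and UV: "U = pushforward (topspace X) (path_components_of X) (pc_proj X) V"
        and cx: "c = pc_proj X x" by blast
      have x: "x \<in> topspace X" and Vc: "\<And>Ob. openin X Ob \<Longrightarrow> x \<in> Ob \<Longrightarrow> Ob \<in> V"
        using V unfolding ultra_conv_def by auto
      have "x \<in> {x \<in> topspace X. pc_proj X x \<in> W}" using x cx W(2) by simp
      then have "{x \<in> topspace X. pc_proj X x \<in> W} \<in> V" using Vc Wo by blast
      then show ?thesis unfolding UV mem_pushforward using WP by simp
    qed
  qed
  then show "(U, c) \<in> ultra_conv (pi0_top X)"
    unfolding ultra_conv_def topspace_pi0_top using u c by simp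
qed

lemma conv_point_uf:
  assumes "is_ultrafilter_on (topspace X) V" "x \<in> topspace X"
    "\<And>Ob. openin X Ob \<Longrightarrow> x \<in> Ob \<Longrightarrow> Ob \<in> V"
  shows "(V, x) \<in> ultra_conv X"
  unfolding ultra_conv_def using assms by auto

lemma push_in_ps:
  assumes "(V, x) \<in> ultra_conv X"
  shows "(pushforward (topspace X) (path_components_of X) (pc_proj X) V, pc_proj X x) \<in> pi0_ps X"
proof -
  have V: "is_ultrafilter_on (topspace X) V" "x \<in> topspace X" using assms unfolding ultra_conv_def by auto
  show ?thesis unfolding pi0_ps_def
    using uf_pushforward[OF pc_proj_image V(1)] pc_proj_in[OF V(2)] assms by blast
qed

lemma top_to_pi0:
  assumes T: "topspace T = path_components_of X" "ultra_conv T = pi0_ps X"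
  shows "ultra_conv (pi0_top X) \<subseteq> pi0_ps X"
proof -
  have Topen: "openin (pi0_top X) W" if W: "openin T W" for W
  proof -
    have WP: "W \<subseteq> path_components_of X" using openin_subset[OF W] T(1) by simp
    let ?pre = "{x \<in> topspace X. pc_proj X x \<in> W}"
    have "openin X ?pre"
    proof (subst openin_subopen, rule ballI)
      fix x assume xp: "x \<in> ?pre"
      show "\<exists>Ob. openin X Ob \<and> x \<in> Ob \<and> Ob \<subseteq> ?pre"
      proof (rule ccontr)
        assume nO: "\<not> (\<exists>Ob. openin X Ob \<and> x \<in> Ob \<and> Ob \<subseteq> ?pre)"
        let ?B = "{Ob. openin X Ob \<and> x \<in> Ob} \<union> {topspace X - ?pre}"
        have Bsub: "?B \<subseteq> Pow (topspace X)" using openin_subset by auto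
        have "fipS (topspace X) ?B" unfolding fipS_def
        proof (intro allI impI)
          fix F assume F: "finite F \<and> F \<subseteq> ?B"
          let ?F1 = "F - {topspace X - ?pre}"
          have F1f: "finite ?F1" using F by blast
          have F1o: "openin X Ob \<and> x \<in> Ob" if "Ob \<in> ?F1" for Ob
          proof -
            have "Ob \<in> ?B" using that F by blast
            moreover have "Ob \<noteq> topspace X - ?pre" using that by blast
            ultimately show ?thesis by blast
          qed
          have oo: "openin X (topspace X \<inter> \<Inter>?F1)"
            by (rule openin_Int_Inter[OF F1f openin_topspace]) (use F1o in blast)
          have xo: "x \<in> topspace X \<inter> \<Inter>?F1" using F1o xp by blast
          have "\<not> (topspace X \<inter> \<Inter>?F1 \<subseteq> ?pre)"
          proof
            assume "topspace X \<inter> \<Inter>?F1 \<subseteq> ?pre"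
            then show False using nO oo xo by blast
          qed
          then obtain z where z1: "z \<in> topspace X \<inter> \<Inter>?F1" and z2: "z \<notin> ?pre"
            by (meson subsetI)
          have "z \<in> Y" if "Y \<in> F" for Y
          proof (cases "Y = topspace X - ?pre")
            case True then show ?thesis using z1 z2 by simp
          next
            case False then show ?thesis using z1 that by blast
          qed
          then have "z \<in> topspace X \<inter> \<Inter>F" using z1 by blast
          then show "topspace X \<inter> \<Inter>F \<noteq> {}" by blast
        qed
        then obtain V where V: "is_ultrafilter_on (topspace X) V" "?B \<subseteq> V"
          using ultrafilter_exists[OF Bsub] by blast
        have xt: "x \<in> topspace X" using xp by simp
        have Vx: "(V, x) \<in> ultra_conv X" by (rule conv_point_uf[OF V(1) xt]) (use V(2) in auto)
        have "(pushforward (topspace X) (path_components_of X) (pc_proj X) V, pc_proj X x) \<in> ultra_conv T"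
          using push_in_ps[OF Vx] T(2) by simp
        then have "W \<in> pushforward (topspace X) (path_components_of X) (pc_proj X) V"
          using W xp unfolding ultra_conv_def by auto
        then have "?pre \<in> V" by (simp add: mem_pushforward)
        moreover have "topspace X - ?pre \<in> V" using V(2) by blast
        ultimately show False by (rule uf_not_both[OF V(1)])
      qed
    qed
    then show ?thesis unfolding openin_pi0_top using WP by simp
  qed
  have "ultra_conv (pi0_top X) \<subseteq> ultra_conv T"
  proof (rule subrelI)
    fix U c
    show "(U, c) \<in> ultra_conv (pi0_top X) \<Longrightarrow> (U, c) \<in> ultra_conv T"
    proof -
      assume h: "(U, c) \<in> ultra_conv (pi0_top X)"
      have u: "is_ultrafilter_on (path_components_of X) U" "c \<in> path_components_of X"
        and cv: "\<And>W. openin (pi0_top X) W \<Longrightarrow> c \<in> W \<Longrightarrow> W \<in> U"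
        using h unfolding ultra_conv_def topspace_pi0_top by auto
      show ?thesis unfolding ultra_conv_def T(1) using u cv Topen by blast
    qed
  qed
  then show ?thesis using T(2) by simp
qed


lemma biq_to_ps:
  assumes bq: "biquotient_map X (pi0_top X) (pc_proj X)"
  shows "ultra_conv (pi0_top X) \<subseteq> pi0_ps X"
proof (rule subrelI)
  fix U c assume h: "(U, c) \<in> ultra_conv (pi0_top X)"
  have u: "is_ultrafilter_on (path_components_of X) U" and c: "c \<in> path_components_of X"
    and cv: "\<And>W. openin (pi0_top X) W \<Longrightarrow> c \<in> W \<Longrightarrow> W \<in> U"
    using h unfolding ultra_conv_def topspace_pi0_top by auto
  have bq3: "\<forall>y \<in> topspace (pi0_top X). \<forall>Cov. (\<forall>W \<in> Cov. openin X W) \<and>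
         {x \<in> topspace X. pc_proj X x = y} \<subseteq> \<Union>Cov \<longrightarrow>
         (\<exists>Fin N. finite Fin \<and> Fin \<subseteq> Cov \<and> openin (pi0_top X) N \<and> y \<in> N \<and>
                 N \<subseteq> (\<Union>W \<in> Fin. pc_proj X ` W))"
    using bq unfolding biquotient_map_def by (elim conjE) assumption
  have cT: "c \<in> topspace (pi0_top X)" unfolding topspace_pi0_top by (rule c)
  have imgP: "pc_proj X ` W \<subseteq> path_components_of X" if "openin X W" for W
    by (rule subset_trans[OF image_mono[OF openin_subset[OF that]] pc_proj_image])
  have "\<exists>x\<in>c. \<forall>Ob. openin X Ob \<and> x \<in> Ob \<longrightarrow> pc_proj X ` Ob \<in> U"
  proof (rule ccontr)
    assume nex: "\<not> (\<exists>x\<in>c. \<forall>Ob. openin X Ob \<and> x \<in> Ob \<longrightarrow> pc_proj X ` Ob \<in> U)"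
    have "\<exists>Ob. openin X Ob \<and> x \<in> Ob \<and> pc_proj X ` Ob \<notin> U" if "x \<in> c" for x
      using nex that by meson
    then have "\<forall>x\<in>c. \<exists>Ob. openin X Ob \<and> x \<in> Ob \<and> pc_proj X ` Ob \<notin> U" by (rule ballI)
    then have "\<exists>g. \<forall>x\<in>c. openin X (g x) \<and> x \<in> g x \<and> pc_proj X ` (g x) \<notin> U"
      by (rule bchoice)
    then obtain g where g0: "\<forall>x\<in>c. openin X (g x) \<and> x \<in> g x \<and> pc_proj X ` (g x) \<notin> U"
      by (elim exE)
    have g: "openin X (g x) \<and> x \<in> g x \<and> pc_proj X ` (g x) \<notin> U" if "x \<in> c" for x
      using g0 that by (rule bspec)
    have c1: "\<forall>W \<in> g ` c. openin X W"
    proof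
      fix W assume "W \<in> g ` c"
      then obtain y where "y \<in> c" "W = g y" by (rule imageE)
      then show "openin X W" using g by simp
    qed
    have c2: "{x \<in> topspace X. pc_proj X x = c} \<subseteq> \<Union>(g ` c)"
    proof
      fix x assume "x \<in> {x \<in> topspace X. pc_proj X x = c}"
      then have "x \<in> c" unfolding fiber_eq[OF c] .
      then show "x \<in> \<Union>(g ` c)" using g[of x] by (intro UnionI[of "g x"]) auto
    qed
    have "\<exists>Fin N. finite Fin \<and> Fin \<subseteq> g ` c \<and> openin (pi0_top X) N \<and> c \<in> N \<and>
                 N \<subseteq> (\<Union>W \<in> Fin. pc_proj X ` W)"
      by (rule bspec[OF bq3 cT, THEN spec, THEN mp, OF conjI[OF c1 c2]])
    then obtain Fin N where FN: "finite Fin" "Fin \<subseteq> g ` c" "openin (pi0_top X) N" "c \<in> N"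
      "N \<subseteq> (\<Union>W \<in> Fin. pc_proj X ` W)" by (elim exE conjE)
    have NU: "N \<in> U" using cv[OF FN(3) FN(4)] .
    have sub: "\<forall>W\<in>Fin. pc_proj X ` W \<subseteq> path_components_of X"
    proof
      fix W assume "W \<in> Fin"
      then have "W \<in> g ` c" using FN(2) by blast
      then have "openin X W" using c1 by blast
      then show "pc_proj X ` W \<subseteq> path_components_of X" by (rule imgP)
    qed
    have "(\<Union>W \<in> Fin. pc_proj X ` W) \<subseteq> path_components_of X" using sub by (simp add: UN_subset_iff)
    then have UU: "(\<Union>W \<in> Fin. pc_proj X ` W) \<in> U"
      by (rule uf_up[OF u NU FN(5)])
    obtain W where W: "W \<in> Fin" "pc_proj X ` W \<in> U"
      using uf_finite_union[OF u FN(1), of "\<lambda>W. pc_proj X ` W", OF sub UU] by (rule bexE)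
    obtain y where "y \<in> c" "W = g y" using W(1) FN(2) by blast
    then show False using W(2) g by simp
  qed
  then obtain x where xc: "x \<in> c" and xn: "\<And>Ob. openin X Ob \<Longrightarrow> x \<in> Ob \<Longrightarrow> pc_proj X ` Ob \<in> U"
    by blast
  have xt: "x \<in> topspace X" using xc path_components_of_subset[OF c] by blast
  have qx: "pc_proj X x = c" using pc_proj_eq[OF c xt] xc by simp
  define h where "h = (\<lambda>A. {z \<in> topspace X. pc_proj X z \<in> A})"
  let ?B = "{Ob. openin X Ob \<and> x \<in> Ob} \<union> h ` U"
  have Bsub: "?B \<subseteq> Pow (topspace X)" unfolding h_def using openin_subset by auto
  have "fipS (topspace X) ?B" unfolding fipS_def
  proof (intro allI impI)
    fix F assume F: "finite F \<and> F \<subseteq> ?B"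
    let ?F1 = "F \<inter> {Ob. openin X Ob \<and> x \<in> Ob}"
    have "F - ?F1 \<subseteq> h ` U" using F by blast
    then obtain G where G: "G \<subseteq> U" "finite G" "F - ?F1 = h ` G"
      using finite_subset_image[of "F - ?F1" h U] F by blast
    have F1f: "finite ?F1" using F by blast
    have oo: "openin X (topspace X \<inter> \<Inter>?F1)"
      by (rule openin_Int_Inter[OF F1f openin_topspace]) blast
    have xo: "x \<in> topspace X \<inter> \<Inter>?F1" using xt by blast
    have qO: "pc_proj X ` (topspace X \<inter> \<Inter>?F1) \<in> U" using xn[OF oo xo] .
    have AG: "path_components_of X \<inter> \<Inter>G \<in> U" using uf_Inter[OF u G(2) G(1)] .
    have "pc_proj X ` (topspace X \<inter> \<Inter>?F1) \<inter> (path_components_of X \<inter> \<Inter>G) \<in> U"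
      using uf_int[OF u qO AG] .
    then have "pc_proj X ` (topspace X \<inter> \<Inter>?F1) \<inter> (path_components_of X \<inter> \<Inter>G) \<noteq> {}"
      using uf_empty[OF u] by metis
    then obtain z where z1: "z \<in> topspace X \<inter> \<Inter>?F1" and z2: "pc_proj X z \<in> \<Inter>G" by blast
    have "z \<in> Y" if "Y \<in> F" for Y
    proof (cases "Y \<in> ?F1")
      case True then show ?thesis using z1 by blast
    next
      case False
      then have "Y \<in> h ` G" using that G(3) by blast
      then obtain A where "A \<in> G" "Y = h A" by blast
      then show ?thesis using z1 z2 unfolding h_def by blast
    qed
    then have "z \<in> topspace X \<inter> \<Inter>F" using z1 by blast
    then show "topspace X \<inter> \<Inter>F \<noteq> {}" by blast
  qed
  then obtain V where V: "is_ultrafilter_on (topspace X) V" "?B \<subseteq> V"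
    using ultrafilter_exists[OF Bsub] by blast
  have Vx: "(V, x) \<in> ultra_conv X" by (rule conv_point_uf[OF V(1) xt]) (use V(2) in auto)
  have pu: "is_ultrafilter_on (path_components_of X) (pushforward (topspace X) (path_components_of X) (pc_proj X) V)"
    using uf_pushforward[OF pc_proj_image V(1)] .
  have "U \<subseteq> pushforward (topspace X) (path_components_of X) (pc_proj X) V"
  proof
    fix A assume A: "A \<in> U"
    have "h A \<in> V" using A V(2) by blast
    then show "A \<in> pushforward (topspace X) (path_components_of X) (pc_proj X) V"
      unfolding mem_pushforward h_def using uf_sub[OF u A] by simp
  qed
  then have UV: "U = pushforward (topspace X) (path_components_of X) (pc_proj X) V"
    by (rule uf_eq[OF u pu])
  have ex: "\<exists>V x. (V, x) \<in> ultra_conv X \<and>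
             U = pushforward (topspace X) (path_components_of X) (pc_proj X) V \<and>
             c = pc_proj X x" using Vx UV qx by blast
  show "(U, c) \<in> pi0_ps X"
    unfolding pi0_ps_def using u c ex by simp
qed


lemma ps_to_biq:
  assumes eq: "ultra_conv (pi0_top X) \<subseteq> pi0_ps X"
  shows "biquotient_map X (pi0_top X) (pc_proj X)"
proof -
  have cont: "continuous_map X (pi0_top X) (pc_proj X)"
    unfolding continuous_map topspace_pi0_top openin_pi0_top using pc_proj_image by simp
  have surj: "pc_proj X ` topspace X = topspace (pi0_top X)"
    unfolding topspace_pi0_top by (rule pc_proj_surj)
  have main: "\<exists>Fin N. finite Fin \<and> Fin \<subseteq> Cov \<and> openin (pi0_top X) N \<and> c \<in> N \<and>
                 N \<subseteq> (\<Union>W \<in> Fin. pc_proj X ` W)"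
    if cT: "c \<in> topspace (pi0_top X)" and Co: "\<forall>W \<in> Cov. openin X W"
      and fib: "{x \<in> topspace X. pc_proj X x = c} \<subseteq> \<Union>Cov" for c Cov
  proof (rule ccontr)
    assume nex: "\<not> (\<exists>Fin N. finite Fin \<and> Fin \<subseteq> Cov \<and> openin (pi0_top X) N \<and> c \<in> N \<and>
                 N \<subseteq> (\<Union>W \<in> Fin. pc_proj X ` W))"
    have c: "c \<in> path_components_of X" using cT unfolding topspace_pi0_top .
    have fib': "c \<subseteq> \<Union>Cov" using fib unfolding fiber_eq[OF c] .
    define k where "k = (\<lambda>W. path_components_of X - pc_proj X ` W)"
    let ?P = "path_components_of X"
    let ?B = "{N. openin (pi0_top X) N \<and> c \<in> N} \<union> k ` Cov"
    have Bsub: "?B \<subseteq> Pow ?P"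
    proof
      fix Y assume "Y \<in> ?B"
      then show "Y \<in> Pow ?P"
      proof
        assume "Y \<in> {N. openin (pi0_top X) N \<and> c \<in> N}"
        then show ?thesis unfolding openin_pi0_top by simp
      next
        assume "Y \<in> k ` Cov"
        then show ?thesis unfolding k_def by blast
      qed
    qed
    have "fipS ?P ?B" unfolding fipS_def
    proof (intro allI impI)
      fix F assume F: "finite F \<and> F \<subseteq> ?B"
      let ?F1 = "F \<inter> {N. openin (pi0_top X) N \<and> c \<in> N}"
      have "F - ?F1 \<subseteq> k ` Cov" using F by blast
      then obtain G where G: "G \<subseteq> Cov" "finite G" "F - ?F1 = k ` G"
        using finite_subset_image[of "F - ?F1" k Cov] F by blast
      have F1f: "finite ?F1" using F by blast
      have oP: "openin (pi0_top X) ?P" using openin_topspace[of "pi0_top X"] unfolding topspace_pi0_top .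
      have oo: "openin (pi0_top X) (?P \<inter> \<Inter>?F1)"
        by (rule openin_Int_Inter[OF F1f oP]) blast
      have co: "c \<in> ?P \<inter> \<Inter>?F1" using c by blast
      have "\<not> (?P \<inter> \<Inter>?F1 \<subseteq> (\<Union>W \<in> G. pc_proj X ` W))"
      proof
        assume "?P \<inter> \<Inter>?F1 \<subseteq> (\<Union>W \<in> G. pc_proj X ` W)"
        then have "finite G \<and> G \<subseteq> Cov \<and> openin (pi0_top X) (?P \<inter> \<Inter>?F1) \<and> c \<in> ?P \<inter> \<Inter>?F1 \<and>
                 ?P \<inter> \<Inter>?F1 \<subseteq> (\<Union>W \<in> G. pc_proj X ` W)" using G oo co by simp
        then have "\<exists>Fin N. finite Fin \<and> Fin \<subseteq> Cov \<and> openin (pi0_top X) N \<and> c \<in> N \<and>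
                 N \<subseteq> (\<Union>W \<in> Fin. pc_proj X ` W)" by (intro exI)
        then show False using nex by (rule notE[rotated])
      qed
      then obtain z where z1: "z \<in> ?P \<inter> \<Inter>?F1" and z2: "z \<notin> (\<Union>W \<in> G. pc_proj X ` W)"
        by (meson subsetI)
      have "z \<in> Y" if "Y \<in> F" for Y
      proof (cases "Y \<in> ?F1")
        case True then show ?thesis using z1 by blast
      next
        case False
        then have "Y \<in> k ` G" using that G(3) by blast
        then obtain W where "W \<in> G" "Y = k W" by blast
        then show ?thesis using z1 z2 unfolding k_def by blast
      qed
      then have "z \<in> ?P \<inter> \<Inter>F" using z1 by blast
      then show "?P \<inter> \<Inter>F \<noteq> {}" by blast
    qed
    then obtain U where U: "is_ultrafilter_on ?P U" "?B \<subseteq> U"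
      using ultrafilter_exists[OF Bsub] by blast
    have kU: "k W \<in> U" if "W \<in> Cov" for W using U(2) that by blast
    have "\<forall>W. openin (pi0_top X) W \<and> c \<in> W \<longrightarrow> W \<in> U" using U(2) by blast
    then have "(U, c) \<in> ultra_conv (pi0_top X)"
      unfolding ultra_conv_def topspace_pi0_top using U(1) c by simp
    then have "(U, c) \<in> pi0_ps X" by (rule subsetD[OF eq])
    then have cs: "U = principal_uf ?P c \<or>
      (\<exists>V x. (V, x) \<in> ultra_conv X \<and>
             U = pushforward (topspace X) ?P (pc_proj X) V \<and> c = pc_proj X x)"
      unfolding pi0_ps_def by simp
    then show False
    proof
      assume Up: "U = principal_uf ?P c"
      obtain x where xc: "x \<in> c" using nonempty_path_components_of[OF c] by blast
      then obtain W where W: "W \<in> Cov" "x \<in> W" using fib' by blast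
      have xt: "x \<in> topspace X" using xc path_components_of_subset[OF c] by blast
      have "pc_proj X x = c" using pc_proj_eq[OF c xt] xc by simp
      then have "c \<in> pc_proj X ` W" using W(2) by (metis imageI)
      moreover have "c \<in> k W" using kU[OF W(1)] Up unfolding principal_uf_def by simp
      ultimately show False unfolding k_def by blast
    next
      assume "\<exists>V x. (V, x) \<in> ultra_conv X \<and>
             U = pushforward (topspace X) ?P (pc_proj X) V \<and> c = pc_proj X x"
      then obtain V x where V: "(V, x) \<in> ultra_conv X"
        and UV: "U = pushforward (topspace X) ?P (pc_proj X) V" and cx: "c = pc_proj X x"
        by (elim exE conjE)
      have Vu: "is_ultrafilter_on (topspace X) V" and xt: "x \<in> topspace X"
        and Vc: "\<And>Ob. openin X Ob \<Longrightarrow> x \<in> Ob \<Longrightarrow> Ob \<in> V"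
        using V unfolding ultra_conv_def by auto
      have "x \<in> {x \<in> topspace X. pc_proj X x = c}" using xt cx by simp
      then obtain W where W: "W \<in> Cov" "x \<in> W" using fib by blast
      have Wo: "openin X W" using Co W(1) by blast
      have WV: "W \<in> V" using Vc[OF Wo W(2)] .
      have Wt: "W \<subseteq> topspace X" using openin_subset[OF Wo] .
      have "W \<subseteq> {z \<in> topspace X. pc_proj X z \<in> pc_proj X ` W}" using Wt by blast
      then have "{z \<in> topspace X. pc_proj X z \<in> pc_proj X ` W} \<in> V"
        using uf_up[OF Vu WV] by blast
      moreover have "pc_proj X ` W \<subseteq> ?P"
        by (rule subset_trans[OF image_mono[OF Wt] pc_proj_image])
      ultimately have "pc_proj X ` W \<in> U" unfolding UV mem_pushforward by simp
      moreover have "?P - pc_proj X ` W \<in> U" using kU[OF W(1)] unfolding k_def .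
      ultimately show False by (rule uf_not_both[OF U(1)])
    qed
  qed
  show ?thesis unfolding biquotient_map_def
  proof (intro conjI cont surj ballI allI impI)
    fix y Cov assume "y \<in> topspace (pi0_top X)"
      "(\<forall>W\<in>Cov. openin X W) \<and> {x \<in> topspace X. pc_proj X x = y} \<subseteq> \<Union> Cov"
    then show "\<exists>Fin N. finite Fin \<and> Fin \<subseteq> Cov \<and> openin (pi0_top X) N \<and> y \<in> N \<and>
                 N \<subseteq> (\<Union>W \<in> Fin. pc_proj X ` W)" by (elim conjE) (rule main)
  qed
qed

theorem proposition4p4:
  fixes X :: "'a topology"
  shows "((\<exists>T :: 'a set topology. topspace T = path_components_of X \<and> ultra_conv T = pi0_ps X)
           \<longleftrightarrow> pi0_ps X = ultra_conv (pi0_top X))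
       \<and> (pi0_ps X = ultra_conv (pi0_top X)
           \<longleftrightarrow> biquotient_map X (pi0_top X) (pc_proj X))"
proof (intro conjI iffI)
  assume "\<exists>T :: 'a set topology. topspace T = path_components_of X \<and> ultra_conv T = pi0_ps X"
  then obtain T :: "'a set topology" where T: "topspace T = path_components_of X" "ultra_conv T = pi0_ps X"
    by (elim exE conjE)
  show "pi0_ps X = ultra_conv (pi0_top X)"
    by (rule equalityI[OF ps_sub_top top_to_pi0[OF T]])
next
  assume eq: "pi0_ps X = ultra_conv (pi0_top X)"
  show "\<exists>T :: 'a set topology. topspace T = path_components_of X \<and> ultra_conv T = pi0_ps X"
    by (rule exI[of _ "pi0_top X"], rule conjI[OF topspace_pi0_top sym[OF eq]])
next
  assume eq: "pi0_ps X = ultra_conv (pi0_top X)"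
  have "ultra_conv (pi0_top X) \<subseteq> pi0_ps X" using eq by (rule equalityD2)
  then show "biquotient_map X (pi0_top X) (pc_proj X)" by (rule ps_to_biq)
next
  assume "biquotient_map X (pi0_top X) (pc_proj X)"
  then have "ultra_conv (pi0_top X) \<subseteq> pi0_ps X" by (rule biq_to_ps)
  then show "pi0_ps X = ultra_conv (pi0_top X)" by (rule equalityI[OF ps_sub_top])
qed

end
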